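(* For all real $x\ge4$, $H(x)\log(H(x))<\dfrac{x^2}{x+\frac{6}{\pi^2}}$.
   Context: $H(x)=\int_0^1\frac{t^x-1}{t-1}\,dt$ for real $x\ge1$; it satisfies $H(n)=1+\frac12+\cdots+\frac1n$ for $n\in\mathbb{N}$ and $H(x)=\psi(x+1)+\gamma$ with $\psi=\Gamma'/\Gamma$ the digamma function. *)

theory Defs
  imports "HOL-Analysis.Analysis"
begin

definition H :: "real \<Rightarrow> real" where
  "H x = integral {0..1} (\<lambda>t. (t powr x - 1) / (t - 1))"

end

theory Submission
  imports Defs
begin

lemma bern:
  fixes x t :: real assumes "x \<ge> 1" "0 < t"
  shows "t powr x - 1 \<ge> x * (t - 1)"
proof -
  have "(\<lambda>t. t powr x) t - (\<lambda>t. t powr x) 1 \<ge> (x * 1 powr (x - 1)) * (t - 1)"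
  proof (rule convex_on_imp_above_tangent[where A="{0<..}"])
    show "convex_on {0<..} (\<lambda>t. t powr x)" using powr_convex assms by blast
    show "((\<lambda>t. t powr x) has_field_derivative x * 1 powr (x - 1)) (at 1 within {0<..})"
      by (rule derivative_eq_intros | simp)+
  qed (use assms in \<open>auto simp: interior_open\<close>)
  then show ?thesis by simp
qed

lemma intg:
  fixes x :: real assumes "x \<ge> 4"
  defines "c \<equiv> 1 - 1/x"
  shows "((\<lambda>t. if t \<le> c then 1/(1-t) else x) has_integral (ln x + 1)) {0..1}"
proof -
  have c0: "0 \<le> c" "c < 1" using assms by (auto simp: c_def field_simps)
  have 1: "((\<lambda>t. 1/(1-t)) has_integral ((- ln (1 - c)) - (- ln (1 - 0)))) {0..c}"
  proof (rule fundamental_theorem_of_calculus)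
    fix t assume t: "t \<in> {0..c}"
    then have "t < 1" using c0 by auto
    then show "((\<lambda>t. - ln (1 - t)) has_vector_derivative 1 / (1 - t)) (at t within {0..c})"
      unfolding has_real_derivative_iff_has_vector_derivative [symmetric]
      by (auto intro!: derivative_eq_intros simp: field_simps)
  qed (use c0 in auto)
  have lnc: "- ln (1 - c) = ln x" using assms by (simp add: c_def ln_div)
  have 1: "((\<lambda>t. if t \<le> c then 1/(1-t) else x) has_integral ln x) {0..c}"
    using 1 lnc by (subst has_integral_cong[where g="\<lambda>t. 1/(1-t)"]) auto
  have 2: "((\<lambda>t. x) has_integral x * (1 - c)) {c..1}"
    using has_integral_const_real[of x c 1] c0 by (simp add: mult.commute)
  have 2: "((\<lambda>t. if t \<le> c then 1/(1-t) else x) has_integral 1) {c..1}"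
  proof -
    have "x * (1 - c) = 1" using assms by (simp add: c_def)
    moreover have "((\<lambda>t. if t \<le> c then 1/(1-t) else x) has_integral x * (1 - c)) {c..1}"
      by (rule has_integral_spike_finite[OF _ _ 2, of "{c}"]) auto
    ultimately show ?thesis by simp
  qed
  show ?thesis using has_integral_combine[OF c0(1) _ 1 2] c0 by simp
qed

lemma final_ineq:
  fixes x B :: real assumes "x \<ge> 4" "1 \<le> h" "h \<le> ln x + 1"
  shows "h * ln h < x^2 / (x + 6 / pi^2)"
proof -
  have ln2: "ln 2 \<le> (3/4::real)"
  proof -
    have "1 + 3/4 + (3/4)^2/2 \<le> exp (3/4::real)" by (rule exp_lower_Taylor_quadratic) simp
    then have "2 \<le> exp (3/4::real)" by (simp add: power2_eq_square)
    then show ?thesis by (metis exp_gt_zero ln_exp ln_le_cancel_iff zero_less_numeral)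
  qed
  have lnh: "ln h \<le> h / 2 - 1/4"
  proof -
    have "ln h = ln 2 + ln (h/2)" using assms by (simp add: ln_div)
    also have "\<dots> \<le> 3/4 + (h/2 - 1)"
      using ln2 ln_le_minus_one[of "h/2"] assms by simp
    finally show ?thesis by simp
  qed
  have "h * ln h \<le> h * (h/2 - 1/4)" using lnh assms by (intro mult_left_mono) auto
  also have "\<dots> \<le> (ln x + 1) * ((ln x + 1)/2 - 1/4)"
  proof -
    have "0 \<le> ((ln x + 1) - h) * (((ln x + 1) + h)/2 - 1/4)"
      using assms by (intro mult_nonneg_nonneg) auto
    then show ?thesis by (simp add: field_simps)
  qed
  also have "\<dots> < x - 2/3"
  proof -
    have L: "0 \<le> ln x" using assms by simp
    have "1 + ln x + (ln x)^2/2 \<le> exp (ln x)" by (rule exp_lower_Taylor_quadratic[OF L])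
    then have "1 + ln x + (ln x)^2/2 \<le> x" using assms by simp
    then show ?thesis using L by (simp add: power2_eq_square algebra_simps) argo
  qed
  also have "\<dots> < x - 6 / pi^2"
  proof -
    have "pi^2 > 3^2" using pi_gt3 by (intro power_strict_mono) auto
    then have "6 / pi^2 < 6 / 9" by (intro divide_strict_left_mono) auto
    then show ?thesis by simp
  qed
  also have "\<dots> \<le> x^2 / (x + 6 / pi^2)"
  proof -
    define a where "a = 6 / pi^2"
    have a: "0 < a" by (simp add: a_def)
    have "(x - a) * (x + a) \<le> x^2" by (simp add: algebra_simps power2_eq_square)
    then have "x - a \<le> x^2 / (x + a)" using a assms by (subst le_divide_eq) auto
    then show ?thesis by (simp add: a_def)
  qed
  finally show ?thesis .
qed

theorem mainTheorem15:
  fixes x :: real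
  assumes "x \<ge> 4"
  shows "H x * ln (H x) < x^2 / (x + 6 / pi^2)"
proof -
  define f where "f = (\<lambda>t::real. (t powr x - 1) / (t - 1))"
  define c where "c = 1 - 1/x"
  have c0: "0 \<le> c" "c < 1" using assms by (auto simp: c_def field_simps)
  define g where "g = (\<lambda>t. if t \<le> c then 1/(1-t) else x)"
  have gi: "(g has_integral (ln x + 1)) {0..1}" unfolding g_def c_def using intg[OF assms] .
  show ?thesis
  proof (cases "f integrable_on {0..1}")
    case False
    then have "H x = 0" unfolding H_def f_def[symmetric] by (simp add: not_integrable_integral)
    moreover have "0 < x^2 / (x + 6 / pi^2)" using assms by (intro divide_pos_pos add_pos_pos) auto
    ultimately show ?thesis by simp
  next
    case True
    define f' where "f' = f(1 := 1)"
    have eq: "H x = integral {0..1} f'"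
      unfolding H_def f_def[symmetric] f'_def by (rule integral_spike[of "{1}"]) auto
    have f'i: "f' integrable_on {0..1}"
      unfolding f'_def by (rule integrable_spike[OF True, of "{1}"]) auto
    have pt: "1 \<le> f' t \<and> f' t \<le> g t" if t: "t \<in> {0..1}" for t
    proof (cases "t = 1")
      case True then show ?thesis using assms c0 by (simp add: f'_def g_def)
    next
      case False
      then have t1: "0 \<le> t" "t < 1" using t by auto
      have p0: "0 \<le> t powr x" by simp
      have pt: "t powr x \<le> t"
      proof (cases "t = 0")
        case False
        then have "t powr x \<le> t powr 1" using t1 assms by (intro powr_mono') auto
        then show ?thesis using t1 False by simp
      qed simp
      have f't: "f' t = (1 - t powr x) / (1 - t)" using False
        by (simp add: f'_def f_def) (metis minus_diff_eq minus_divide_divide)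
      have lo: "1 \<le> f' t" using pt t1 by (simp add: f't field_simps)
      have hi: "f' t \<le> g t"
      proof (cases "t \<le> c")
        case True
        then show ?thesis using p0 t1 by (simp add: f't g_def divide_right_mono)
      next
        case nc: False
        then have "0 < t" using c0 by auto
        then have "1 - t powr x \<le> x * (1 - t)" using bern[of x t] assms by (simp add: algebra_simps)
        then show ?thesis using nc t1 by (simp add: f't g_def field_simps)
      qed
      show ?thesis using lo hi by simp
    qed
    have "integral {0..1} (\<lambda>t::real. 1::real) \<le> integral {0..1} f'"
      by (rule integral_le[OF integrable_const_ivl f'i]) (use pt in auto)
    then have h1: "1 \<le> H x" using eq by simp
    have "integral {0..1} f' \<le> integral {0..1} g"
      using f'i gi pt by (intro integral_le) auto
    then have h2: "H x \<le> ln x + 1" using eq gi by (simp add: integral_unique)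
    show ?thesis by (rule final_ineq[OF assms h1 h2])
  qed
qed

end
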